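(* Let $N=\{1,\dots,n\}$ with $n\ge 2$ and $\mathcal{D}=\mathbb{R}^n_+$. A rule $R:\mathcal{D}\to\mathbb{R}^n_+$ satisfies scale invariance, downstream impartiality, upstream invariance, and order preservation if and only if it is the no-transfer rule, i.e. $R_i(e)=e_i$ for each $e\in\mathcal{D}$ and each $i\in N$.
   Context: Agents $1,\dots,n$ are located along a linear river, lower index meaning more upstream; agent $i$ has river inflow $e_i\ge 0$, and $e=(e_1,\dots,e_n)\in\mathcal{D}=\mathbb{R}^n_+$. An allocation for $e$ is $x\in\mathbb{R}^n_+$ with $\sum_{i=1}^n x_i=\sum_{i=1}^n e_i$ and $\sum_{i=1}^k x_i\le\sum_{i=1}^k e_i$ for each $k=1,\dots,n-1$. A rule is a map $R:\mathcal{D}\to\mathbb{R}^n_+$ assigning to each $e$ an allocation $R(e)$ for $e$. Axioms: Scale invariance: for each $e\in\mathcal{D}$ and each $\gamma\in\mathbb{R}_+$, $R(\gamma e)=\gamma R(e)$. Upstream invariance: for each $e,e'\in\mathcal{D}$ such that $e_i<e'_i$ for some $i\in N$ and $e_j=e'_j$ for all $j\ne i$, we have $R_k(e)=R_k(e')$ for each $k<i$. Downstream impartiality: for each $e,e'\in\mathcal{D}$ such that $e_i<e'_i$ for some $i\in N$ and $e_j=e'_j$ for all $j\ne i$, and for each $k,l>i$ with $e_k=e_l$, we have $R_k(e')-R_k(e)=R_l(e')-R_l(e)$. Order preservation: for each $e\in\mathcal{D}$ and $i,j\in N$, if $i<j$ and $e_i\ge e_j$ then $R_i(e)\ge R_j(e)$.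 *)

theory Defs
  imports Complex_Main
begin

text \<open>Agents are 1,...,n (lower index = more upstream). A profile e in D = R^n_+ is
represented as a function nat => real, nonnegative on {1..n} and zero outside {1..n}.\<close>

definition profiles :: "nat \<Rightarrow> (nat \<Rightarrow> real) set" where
  "profiles n = {e. (\<forall>i\<in>{1..n}. 0 \<le> e i) \<and> (\<forall>i. i \<notin> {1..n} \<longrightarrow> e i = 0)}"

definition is_allocation :: "nat \<Rightarrow> (nat \<Rightarrow> real) \<Rightarrow> (nat \<Rightarrow> real) \<Rightarrow> bool" where
  "is_allocation n e x \<longleftrightarrow>
     (\<forall>i\<in>{1..n}. 0 \<le> x i) \<and>
     (\<Sum>i=1..n. x i) = (\<Sum>i=1..n. e i) \<and>
     (\<forall>k\<in>{1..n-1}. (\<Sum>i=1..k. x i) \<le> (\<Sum>i=1..k. e i))"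

definition is_rule :: "nat \<Rightarrow> ((nat \<Rightarrow> real) \<Rightarrow> (nat \<Rightarrow> real)) \<Rightarrow> bool" where
  "is_rule n R \<longleftrightarrow> (\<forall>e\<in>profiles n. is_allocation n e (R e))"

definition scale_invariance :: "nat \<Rightarrow> ((nat \<Rightarrow> real) \<Rightarrow> (nat \<Rightarrow> real)) \<Rightarrow> bool" where
  "scale_invariance n R \<longleftrightarrow>
     (\<forall>e\<in>profiles n. \<forall>\<gamma>::real. 0 \<le> \<gamma> \<longrightarrow>
        (\<forall>i\<in>{1..n}. R (\<lambda>j. \<gamma> * e j) i = \<gamma> * R e i))"

definition raise_at :: "nat \<Rightarrow> (nat \<Rightarrow> real) \<Rightarrow> (nat \<Rightarrow> real) \<Rightarrow> nat \<Rightarrow> bool" where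
  "raise_at n e e' i \<longleftrightarrow> e \<in> profiles n \<and> e' \<in> profiles n \<and> i \<in> {1..n} \<and>
     e i < e' i \<and> (\<forall>j\<in>{1..n}. j \<noteq> i \<longrightarrow> e j = e' j)"

definition upstream_invariance :: "nat \<Rightarrow> ((nat \<Rightarrow> real) \<Rightarrow> (nat \<Rightarrow> real)) \<Rightarrow> bool" where
  "upstream_invariance n R \<longleftrightarrow>
     (\<forall>e e' i. raise_at n e e' i \<longrightarrow> (\<forall>k\<in>{1..n}. k < i \<longrightarrow> R e k = R e' k))"

definition downstream_impartiality :: "nat \<Rightarrow> ((nat \<Rightarrow> real) \<Rightarrow> (nat \<Rightarrow> real)) \<Rightarrow> bool" where
  "downstream_impartiality n R \<longleftrightarrow>
     (\<forall>e e' i. raise_at n e e' i \<longrightarrow>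
        (\<forall>k\<in>{1..n}. \<forall>l\<in>{1..n}. i < k \<longrightarrow> i < l \<longrightarrow> e k = e l \<longrightarrow>
           R e' k - R e k = R e' l - R e l))"

definition order_preservation :: "nat \<Rightarrow> ((nat \<Rightarrow> real) \<Rightarrow> (nat \<Rightarrow> real)) \<Rightarrow> bool" where
  "order_preservation n R \<longleftrightarrow>
     (\<forall>e\<in>profiles n. \<forall>i\<in>{1..n}. \<forall>j\<in>{1..n}. i < j \<longrightarrow> e j \<le> e i \<longrightarrow> R e j \<le> R e i)"

definition is_no_transfer :: "nat \<Rightarrow> ((nat \<Rightarrow> real) \<Rightarrow> (nat \<Rightarrow> real)) \<Rightarrow> bool" where
  "is_no_transfer n R \<longleftrightarrow> (\<forall>e\<in>profiles n. \<forall>i\<in>{1..n}. R e i = e i)"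

end

theory Submission
  imports Defs
begin

lemma single_change:
  assumes ui: "upstream_invariance n R"
    and e: "e \<in> profiles n" and e': "e' \<in> profiles n" and i: "i \<in> {1..n}"
    and agree: "\<forall>j\<in>{1..n}. j \<noteq> i \<longrightarrow> e j = e' j"
    and k: "k \<in> {1..n}" "k < i"
  shows "R e k = R e' k"
proof -
  consider "e i < e' i" | "e' i < e i" | "e i = e' i" by linarith
  then show ?thesis
  proof cases
    case 1
    hence "raise_at n e e' i" using e e' i agree unfolding raise_at_def by auto
    thus ?thesis using ui k unfolding upstream_invariance_def by blast
  next
    case 2
    hence "raise_at n e' e i" using e e' i agree unfolding raise_at_def by auto
    thus ?thesis using ui k unfolding upstream_invariance_def by (metis)
  next
    case 3
    have "e = e'"
    proof
      fix j show "e j = e' j"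
      proof (cases "j \<in> {1..n}")
        case True thus ?thesis using agree 3 by (cases "j = i") auto
      next
        case False thus ?thesis using e e' unfolding profiles_def by auto
      qed
    qed
    thus ?thesis by simp
  qed
qed

lemma prefix_dep:
  assumes ui: "upstream_invariance n R"
    and e: "e \<in> profiles n" and e': "e' \<in> profiles n" and k: "k \<in> {1..n}"
    and agree: "\<forall>j\<in>{1..k}. e j = e' j"
  shows "R e k = R e' k"
proof -
  define mix where "mix m = (\<lambda>j. if j \<le> m then e j else e' j)" for m
  have mixp: "mix m \<in> profiles n" for m
    using e e' unfolding profiles_def mix_def by auto
  have mk: "mix k = e'"
  proof
    fix j show "mix k j = e' j"
      using agree e e' unfolding mix_def profiles_def
      by (cases "j = 0") auto
  qed
  have mn: "mix n = e"
  proof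
    fix j show "mix n j = e j"
      using e e' unfolding mix_def profiles_def by auto
  qed
  have "k \<le> n" using k by auto
  hence "R (mix n) k = R (mix k) k"
  proof (induction rule: dec_induct)
    case base thus ?case by simp
  next
    case (step m)
    have "R (mix (Suc m)) k = R (mix m) k"
      apply (rule single_change[OF ui mixp mixp, of "Suc m"])
      using step k unfolding mix_def by auto
    thus ?case using step by simp
  qed
  thus ?thesis using mk mn by simp
qed

lemma split_sum:
  fixes g :: "nat \<Rightarrow> real"
  assumes "1 \<le> k" "k \<le> n"
  shows "(\<Sum>i=1..n. g i) = (\<Sum>i\<in>{1..<k}. g i) + g k + (\<Sum>i\<in>{k<..n}. g i)"
proof -
  have eq: "{1..n} = {1..<k} \<union> ({k} \<union> {k<..n})" using assms by auto
  have "(\<Sum>i=1..n. g i) = (\<Sum>i\<in>{1..<k}. g i) + (\<Sum>i\<in>{k} \<union> {k<..n}. g i)"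
    unfolding eq by (rule sum.union_disjoint) auto
  also have "(\<Sum>i\<in>{k} \<union> {k<..n}. g i) = g k + (\<Sum>i\<in>{k<..n}. g i)"
    by (simp add: sum.union_disjoint)
  finally show ?thesis by simp
qed

lemma split_sum2:
  fixes g :: "nat \<Rightarrow> real"
  assumes "1 \<le> k"
  shows "(\<Sum>i=1..k. g i) = (\<Sum>i\<in>{1..<k}. g i) + g k"
proof -
  have "{1..k} = insert k {1..<k}" using assms by auto
  thus ?thesis by simp
qed

lemma forward:
  assumes rule: "is_rule n R" and ui: "upstream_invariance n R"
    and op: "order_preservation n R"
    and kin: "k \<in> {1..n}"
  shows "\<forall>e\<in>profiles n. R e k = e k"
  using kin
proof (induction k rule: less_induct)
  case (less k)
  show ?case
  proof
    fix e assume e: "e \<in> profiles n"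
    define f where "f = (\<lambda>j. if j \<in> {1..n} then (if j \<le> k then e j else e k) else 0)"
    have fp: "f \<in> profiles n" using e less.prems unfolding f_def profiles_def by auto
    have "R e k = R f k"
      by (rule prefix_dep[OF ui e fp less.prems]) (use less.prems in \<open>auto simp: f_def\<close>)
    have fk: "f k = e k" using less.prems by (simp add: f_def)
    have IH: "R f j = f j" if "j \<in> {1..<k}" for j
      using less.IH[of j] that less.prems fp by auto
    have alloc: "is_allocation n f (R f)" using rule fp unfolding is_rule_def by auto
    have k1: "1 \<le> k" "k \<le> n" using less.prems by auto
    have tot: "(\<Sum>i=1..n. R f i) = (\<Sum>i=1..n. f i)" using alloc unfolding is_allocation_def by auto
    have s1: "(\<Sum>i\<in>{1..<k}. R f i) = (\<Sum>i\<in>{1..<k}. f i)" using IH by (rule sum.cong[OF refl])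
    have fu: "f i = e k" if "i \<in> {k<..n}" for i using that k1 by (auto simp: f_def)
    have s2: "(\<Sum>i\<in>{k<..n}. f i) = real (n - k) * e k" using fu by simp
    have s3: "(\<Sum>i\<in>{k<..n}. R f i) \<le> (\<Sum>i\<in>{k<..n}. R f k)"
    proof (rule sum_mono)
      fix i assume "i \<in> {k<..n}"
      thus "R f i \<le> R f k" using op fp k1 fu[of i] fk unfolding order_preservation_def by auto
    qed
    hence s3': "(\<Sum>i\<in>{k<..n}. R f i) \<le> real (n - k) * R f k" by simp
    have main: "(\<Sum>i\<in>{1..<k}. R f i) + R f k + (\<Sum>i\<in>{k<..n}. R f i)
        = (\<Sum>i\<in>{1..<k}. f i) + f k + (\<Sum>i\<in>{k<..n}. f i)"
      using tot split_sum[OF k1, of "R f"] split_sum[OF k1, of f] by simp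
    have "R f k = e k"
    proof (cases "k = n")
      case True
      thus ?thesis using main fk s1 by simp
    next
      case False
      hence "k \<in> {1..n-1}" using k1 by auto
      hence "(\<Sum>i=1..k. R f i) \<le> (\<Sum>i=1..k. f i)" using alloc unfolding is_allocation_def by auto
      hence up: "R f k \<le> e k" using split_sum2[OF k1(1), of "R f"] split_sum2[OF k1(1), of f] s1 fk by simp
      have "real (n - k + 1) * e k \<le> real (n - k + 1) * R f k"
        using main s1 s2 s3' fk by (simp add: algebra_simps)
      hence "e k \<le> R f k" by (rule mult_left_le_imp_le) simp
      thus ?thesis using up by simp
    qed
    thus "R e k = e k" using \<open>R e k = R f k\<close> by simp
  qed
qed

theorem theorem3:
  fixes n :: nat and R :: "(nat \<Rightarrow> real) \<Rightarrow> (nat \<Rightarrow> real)"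
  assumes "2 \<le> n" and "is_rule n R"
  shows "(scale_invariance n R \<and> downstream_impartiality n R \<and>
          upstream_invariance n R \<and> order_preservation n R) \<longleftrightarrow> is_no_transfer n R"
proof
  assume "scale_invariance n R \<and> downstream_impartiality n R \<and>
          upstream_invariance n R \<and> order_preservation n R"
  thus "is_no_transfer n R" using forward[OF assms(2)] unfolding is_no_transfer_def by blast
next
  assume nt: "is_no_transfer n R"
  have sc: "(\<lambda>j. \<gamma> * e j) \<in> profiles n" if "e \<in> profiles n" "0 \<le> \<gamma>" for e and \<gamma> :: real
    using that unfolding profiles_def by auto
  show "scale_invariance n R \<and> downstream_impartiality n R \<and>
          upstream_invariance n R \<and> order_preservation n R"
    using nt sc unfolding is_no_transfer_def scale_invariance_def downstream_impartiality_def
      upstream_invariance_def order_preservation_def raise_at_def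
    by auto
qed

end
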